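(* Let $\mathbf v\in\mathbb R_{>0}^m$, $\tau=\sum_iv_i^2k_i$, and assume $\mathcal P_{\mathbf v}(m,\mathbf k,d)\neq\emptyset$. Let $p_{\mathbf v}=\inf\{\mathrm{FP}(\mathcal V,\mathcal W):(\mathcal V,\mathcal W)\in\mathcal{DRS}_{\mathbf v}\}$. Then: (1) the infimum $p_{\mathbf v}$ is attained; (2) for every $(\mathcal V,\mathcal W)\in\mathcal{DRS}_{\mathbf v}$, $$\mathrm{FP}(\mathcal V,\mathcal W)\ \ge\ p_{\mathbf v}\ \ge\ \frac{\tau^4+d^4}{d\,\tau^2};$$ (3) $\mathrm{FP}(\mathcal V,\mathcal W)=\frac{\tau^4+d^4}{d\tau^2}$ if and only if $\mathcal V$ is tight, i.e. $S_{\mathcal V}=\frac{\tau}{d}I_d$, and $\mathcal W=\frac d\tau\mathcal V=\mathcal V^\#$.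
   Context: Fix integers $m,d\ge1$ and $\mathbf k=(k_1,\dots,k_m)\in\mathbb N^m$ with each $k_i\le d$. A system is an $m$-tuple $\mathcal V=(V_i)_{i=1}^m$ with $V_i\in L(\mathbb C^d,\mathbb C^{k_i})$. Its analysis operator is $T_{\mathcal V}x=(V_1x,\dots,V_mx)\in\bigoplus_i\mathbb C^{k_i}$ and its RS operator is $S_{\mathcal V}=T_{\mathcal V}^*T_{\mathcal V}=\sum_iV_i^*V_i$; $\mathcal V$ is a reconstruction system (RS) if $S_{\mathcal V}$ is invertible, and $\mathcal{RS}(m,\mathbf k,d)$ is the set of RS's. Given weights $\mathbf v\in\mathbb R_{>0}^m$, $\mathcal P_{\mathbf v}(m,\mathbf k,d)$ is the set of RS's with $V_iV_i^*=v_i^2I_{k_i}$ for all $i$. The canonical dual is $\mathcal V^\#=(V_iS_{\mathcal V}^{-1})_i$; $\mathcal W\in\mathcal{RS}$ is a dual of $\mathcal V$ if $T_{\mathcal W}^*T_{\mathcal V}=\sum_iW_i^*V_i=I_d$, and $\mathcal D(\mathcal V)$ is the set of duals. $\mathcal{DRS}_{\mathbf v}=\{(\mathcal V,\mathcal W)\in\mathcal P_{\mathbf v}\times\mathcal{RS}(m,\mathbf k,d):\mathcal W\in\mathcal D(\mathcal V)\}$ and the joint potential is $\mathrm{FP}(\mathcal V,\mathcal W)=\operatorname{tr}S_{\mathcal V}^2+\operatorname{tr}S_{\mathcal W}^2$. *)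

theory Defs
  imports "Jordan_Normal_Form.Schur_Decomposition" "Jordan_Normal_Form.Gauss_Jordan_Elimination"
begin

definition is_system :: "nat \<Rightarrow> (nat \<Rightarrow> nat) \<Rightarrow> nat \<Rightarrow> (nat \<Rightarrow> complex mat) \<Rightarrow> bool" where
  "is_system m k d V \<longleftrightarrow> (\<forall>i<m. V i \<in> carrier_mat (k i) d)"

definition mtrace :: "complex mat \<Rightarrow> complex" where
  "mtrace A = (\<Sum>i<dim_row A. A $$ (i, i))"

definition RS_op :: "nat \<Rightarrow> nat \<Rightarrow> (nat \<Rightarrow> complex mat) \<Rightarrow> complex mat" where
  "RS_op m d V = mat d d (\<lambda>(a, b). \<Sum>i<m. (mat_adjoint (V i) * V i) $$ (a, b))"

(* T_W^* T_V = sum_i W_i^* V_i *)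
definition cross_op :: "nat \<Rightarrow> nat \<Rightarrow> (nat \<Rightarrow> complex mat) \<Rightarrow> (nat \<Rightarrow> complex mat) \<Rightarrow> complex mat" where
  "cross_op m d W V = mat d d (\<lambda>(a, b). \<Sum>i<m. (mat_adjoint (W i) * V i) $$ (a, b))"

definition RS :: "nat \<Rightarrow> (nat \<Rightarrow> nat) \<Rightarrow> nat \<Rightarrow> (nat \<Rightarrow> complex mat) set" where
  "RS m k d = {V. is_system m k d V \<and> invertible_mat (RS_op m d V)}"

definition P_v :: "nat \<Rightarrow> (nat \<Rightarrow> nat) \<Rightarrow> nat \<Rightarrow> (nat \<Rightarrow> real) \<Rightarrow> (nat \<Rightarrow> complex mat) set" where
  "P_v m k d v = {V. V \<in> RS m k d \<and>
      (\<forall>i<m. V i * mat_adjoint (V i) = complex_of_real ((v i)\<^sup>2) \<cdot>\<^sub>m 1\<^sub>m (k i))}"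

definition canon_dual :: "nat \<Rightarrow> nat \<Rightarrow> (nat \<Rightarrow> complex mat) \<Rightarrow> (nat \<Rightarrow> complex mat)" where
  "canon_dual m d V = (\<lambda>i. V i * the (mat_inverse (RS_op m d V)))"

definition duals :: "nat \<Rightarrow> (nat \<Rightarrow> nat) \<Rightarrow> nat \<Rightarrow> (nat \<Rightarrow> complex mat) \<Rightarrow> (nat \<Rightarrow> complex mat) set" where
  "duals m k d V = {W. W \<in> RS m k d \<and> cross_op m d W V = 1\<^sub>m d}"

definition DRS :: "nat \<Rightarrow> (nat \<Rightarrow> nat) \<Rightarrow> nat \<Rightarrow> (nat \<Rightarrow> real)
      \<Rightarrow> ((nat \<Rightarrow> complex mat) \<times> (nat \<Rightarrow> complex mat)) set" where
  "DRS m k d v = {(V, W). V \<in> P_v m k d v \<and> W \<in> duals m k d V}"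

(* joint frame potential FP(V,W) = tr S_V^2 + tr S_W^2 (real, since S_V, S_W are selfadjoint) *)
definition FP :: "nat \<Rightarrow> nat \<Rightarrow> (nat \<Rightarrow> complex mat) \<Rightarrow> (nat \<Rightarrow> complex mat) \<Rightarrow> real" where
  "FP m d V W = Re (mtrace (RS_op m d V * RS_op m d V) + mtrace (RS_op m d W * RS_op m d W))"

end

theory Submission
  imports Defs
begin

lemma adj_dims[simp]: "dim_row (mat_adjoint A) = dim_col A" "dim_col (mat_adjoint A) = dim_row A"
  unfolding mat_adjoint_def by auto

lemma adj_index[simp]: "i < dim_col A \<Longrightarrow> j < dim_row A \<Longrightarrow> mat_adjoint A $$ (i,j) = cnj (A $$ (j,i))"
  unfolding mat_adjoint_def by (simp add: mat_of_rows_index)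

lemma adjmult_index: assumes "A \<in> carrier_mat r c" "B \<in> carrier_mat r c'" "a < c" "b < c'"
  shows "(mat_adjoint A * B) $$ (a,b) = (\<Sum>x<r. cnj (A $$ (x,a)) * B $$ (x,b))"
  using assms by (auto simp: scalar_prod_def lessThan_atLeast0 intro!: sum.cong)

lemma multadj_index: assumes "A \<in> carrier_mat r c" "a < r" "b < r"
  shows "(A * mat_adjoint A) $$ (a,b) = (\<Sum>x<c. A $$ (a,x) * cnj (A $$ (b,x)))"
  using assms by (auto simp: scalar_prod_def lessThan_atLeast0 intro!: sum.cong)

definition IS :: "nat \<Rightarrow> (nat \<Rightarrow> nat) \<Rightarrow> (nat \<times> nat) set" where
  "IS m k = (SIGMA i:{..<m}. {..<k i})"

lemma finite_IS[simp]: "finite (IS m k)" unfolding IS_def by auto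

definition Cx :: "nat \<Rightarrow> (nat \<Rightarrow> nat) \<Rightarrow> (nat \<Rightarrow> complex mat) \<Rightarrow> (nat \<Rightarrow> complex mat) \<Rightarrow> nat \<Rightarrow> nat \<Rightarrow> complex" where
  "Cx m k W V a b = (\<Sum>(i,c)\<in>IS m k. cnj (W i $$ (c,a)) * V i $$ (c,b))"

lemma sum_IS: "(\<Sum>i<m. \<Sum>c<k i. f i c) = (\<Sum>(i,c)\<in>IS m k. f i c)"
  unfolding IS_def by (simp add: sum.Sigma)

lemma cross_op_carrier[simp]: "cross_op m d W V \<in> carrier_mat d d"
  unfolding cross_op_def by auto

lemma RS_op_cross: "RS_op m d V = cross_op m d V V"
  unfolding RS_op_def cross_op_def by simp

lemma RS_op_carrier[simp]: "RS_op m d V \<in> carrier_mat d d"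
  unfolding RS_op_def by auto

lemma op_dims[simp]: "dim_row (RS_op m d V) = d" "dim_col (RS_op m d V) = d"
   "dim_row (cross_op m d W V) = d" "dim_col (cross_op m d W V) = d"
  unfolding RS_op_def cross_op_def by auto

lemma cross_index: assumes "is_system m k d W" "is_system m k d V" "a < d" "b < d"
  shows "cross_op m d W V $$ (a,b) = Cx m k W V a b"
proof -
  have "cross_op m d W V $$ (a,b) = (\<Sum>i<m. \<Sum>c<k i. cnj (W i $$ (c,a)) * V i $$ (c,b))"
    unfolding cross_op_def using assms unfolding is_system_def
    by (auto intro!: sum.cong adjmult_index)
  thus ?thesis unfolding Cx_def sum_IS by simp
qed

lemma RS_index: assumes "is_system m k d V" "a < d" "b < d"
  shows "RS_op m d V $$ (a,b) = Cx m k V V a b"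
  using cross_index[OF assms(1,1,2,3)] RS_op_cross by simp

lemma Cx_cnj: "Cx m k V W b a = cnj (Cx m k W V a b)"
  unfolding Cx_def by (simp add: case_prod_unfold mult.commute)

lemma mtrace_sq: assumes "A \<in> carrier_mat d d"
  shows "mtrace (A * A) = (\<Sum>a<d. \<Sum>b<d. A $$ (a,b) * A $$ (b,a))"
  using assms unfolding mtrace_def by (auto simp: scalar_prod_def lessThan_atLeast0 intro!: sum.cong)

definition Q :: "nat \<Rightarrow> (nat \<Rightarrow> nat) \<Rightarrow> nat \<Rightarrow> (nat \<Rightarrow> complex mat) \<Rightarrow> real" where
  "Q m k d V = (\<Sum>a<d. \<Sum>b<d. (cmod (Cx m k V V a b))\<^sup>2)"

lemma Re_mtrace_RS: assumes "is_system m k d V"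
  shows "Re (mtrace (RS_op m d V * RS_op m d V)) = Q m k d V"
proof -
  have "mtrace (RS_op m d V * RS_op m d V) = (\<Sum>a<d. \<Sum>b<d. Cx m k V V a b * Cx m k V V b a)"
    unfolding mtrace_sq[OF RS_op_carrier] using RS_index[OF assms] by (auto intro!: sum.cong)
  also have "\<dots> = (\<Sum>a<d. \<Sum>b<d. complex_of_real ((cmod (Cx m k V V a b))\<^sup>2))"
  proof -
    have "Cx m k V V a b * Cx m k V V b a = complex_of_real ((cmod (Cx m k V V a b))\<^sup>2)" for a b
      using Cx_cnj[of m k V V b a] complex_norm_square[of "Cx m k V V a b"] by simp
    thus ?thesis by simp
  qed
  finally show ?thesis unfolding Q_def by simp
qed

lemma FP_Q: assumes "is_system m k d V" "is_system m k d W"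
  shows "FP m d V W = Q m k d V + Q m k d W"
  unfolding FP_def using Re_mtrace_RS[OF assms(1)] Re_mtrace_RS[OF assms(2)] by simp

lemma diag_identity:
  fixes s :: "nat \<Rightarrow> nat \<Rightarrow> complex" and c :: real
  shows "(\<Sum>a<d. \<Sum>b<d. (cmod (s a b - (if a = b then complex_of_real c else 0)))\<^sup>2)
     = (\<Sum>a<d. \<Sum>b<d. (cmod (s a b))\<^sup>2) - 2 * c * (\<Sum>a<d. Re (s a a)) + real d * c\<^sup>2"
proof -
  have t: "(cmod (s a b - (if a = b then complex_of_real c else 0)))\<^sup>2
     = (cmod (s a b))\<^sup>2 - (if a = b then 2 * c * Re (s a a) - c\<^sup>2 else 0)" for a b
    unfolding cmod_power2 by (auto simp: power2_eq_square algebra_simps)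
  show ?thesis
    by (simp add: t sum_subtractf sum.distrib sum_distrib_left algebra_simps)
qed

lemma diff_identity:
  fixes w v :: complex and \<alpha> :: real
  shows "(cmod (w - complex_of_real \<alpha> * v))\<^sup>2 = (cmod w)\<^sup>2 - 2 * \<alpha> * Re (cnj w * v) + \<alpha>\<^sup>2 * (cmod v)\<^sup>2"
  unfolding cmod_power2 by (simp add: power2_eq_square algebra_simps)

lemma Re_mult_cnj: "Re (z * cnj z) = (cmod z)\<^sup>2"
  by (simp only: complex_norm_square[symmetric] Re_complex_of_real)

lemma Re_cnj_mult: "Re (cnj z * z) = (cmod z)\<^sup>2"
  using Re_mult_cnj[of z] by (simp add: mult.commute)

lemma Cx_trace: "(\<Sum>a<d. Cx m k W V a a) = (\<Sum>(i,c)\<in>IS m k. \<Sum>a<d. cnj (W i $$ (c,a)) * V i $$ (c,a))"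
  unfolding Cx_def by (subst sum.swap) (simp add: case_prod_unfold)

lemma Cx_trace_Re: "(\<Sum>a<d. Re (Cx m k W W a a)) = (\<Sum>(i,c)\<in>IS m k. \<Sum>a<d. (cmod (W i $$ (c,a)))\<^sup>2)"
proof -
  have "(\<Sum>a<d. Re (Cx m k W W a a)) = Re (\<Sum>a<d. Cx m k W W a a)" by simp
  also have "\<dots> = (\<Sum>(i,c)\<in>IS m k. \<Sum>a<d. Re (cnj (W i $$ (c,a)) * W i $$ (c,a)))"
    unfolding Cx_trace by (simp add: case_prod_unfold)
  also have "\<dots> = (\<Sum>(i,c)\<in>IS m k. \<Sum>a<d. (cmod (W i $$ (c,a)))\<^sup>2)"
    by (simp only: Re_cnj_mult)
  finally show ?thesis .
qed

lemma Cx_trace_Re_cross: "(\<Sum>a<d. Re (Cx m k W V a a)) = (\<Sum>(i,c)\<in>IS m k. \<Sum>a<d. Re (cnj (W i $$ (c,a)) * V i $$ (c,a)))"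
proof -
  have "(\<Sum>a<d. Re (Cx m k W V a a)) = Re (\<Sum>a<d. Cx m k W V a a)" by simp
  thus ?thesis unfolding Cx_trace by (simp add: case_prod_unfold)
qed

lemma trace_V: assumes sys: "is_system m k d V"
  and norm: "\<forall>i<m. V i * mat_adjoint (V i) = complex_of_real ((v i)\<^sup>2) \<cdot>\<^sub>m 1\<^sub>m (k i)"
  shows "(\<Sum>a<d. Re (Cx m k V V a a)) = (\<Sum>i<m. (v i)\<^sup>2 * real (k i))"
proof -
  have row: "(\<Sum>a<d. (cmod (V i $$ (c,a)))\<^sup>2) = (v i)\<^sup>2" if "i < m" "c < k i" for i c
  proof -
    have Vi: "V i \<in> carrier_mat (k i) d" using sys that unfolding is_system_def by auto
    have "(V i * mat_adjoint (V i)) $$ (c,c) = complex_of_real ((v i)\<^sup>2)"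
      using norm that Vi by auto
    hence "(\<Sum>a<d. V i $$ (c,a) * cnj (V i $$ (c,a))) = complex_of_real ((v i)\<^sup>2)"
      using multadj_index[OF Vi that(2) that(2)] by simp
    hence "Re (\<Sum>a<d. V i $$ (c,a) * cnj (V i $$ (c,a))) = (v i)\<^sup>2" by simp
    moreover have "Re (\<Sum>a<d. V i $$ (c,a) * cnj (V i $$ (c,a))) = (\<Sum>a<d. (cmod (V i $$ (c,a)))\<^sup>2)"
      by (simp only: Re_sum Re_mult_cnj)
    ultimately show ?thesis by simp
  qed
  have "(\<Sum>a<d. Re (Cx m k V V a a)) = (\<Sum>(i,c)\<in>IS m k. (v i)\<^sup>2)"
    unfolding Cx_trace_Re by (intro sum.cong refl) (auto simp: IS_def row)
  also have "\<dots> = (\<Sum>i<m. \<Sum>c<k i. (v i)\<^sup>2)" unfolding sum_IS by simp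
  finally show ?thesis by (simp add: mult.commute)
qed

lemma QV_bound: assumes sys: "is_system m k d V"
  and norm: "\<forall>i<m. V i * mat_adjoint (V i) = complex_of_real ((v i)\<^sup>2) \<cdot>\<^sub>m 1\<^sub>m (k i)"
  and tau: "\<tau> = (\<Sum>i<m. (v i)\<^sup>2 * real (k i))" and d: "d > 0"
  shows "Q m k d V \<ge> \<tau>\<^sup>2 / real d"
    and "Q m k d V = \<tau>\<^sup>2 / real d \<Longrightarrow> RS_op m d V = complex_of_real (\<tau> / real d) \<cdot>\<^sub>m 1\<^sub>m d"
proof -
  let ?c = "\<tau> / real d"
  let ?L = "(\<Sum>a<d. \<Sum>b<d. (cmod (Cx m k V V a b - (if a = b then complex_of_real ?c else 0)))\<^sup>2)"
  have tr: "(\<Sum>a<d. Re (Cx m k V V a a)) = \<tau>" using trace_V[OF sys norm] tau by simp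
  have "?L = Q m k d V - 2 * ?c * \<tau> + real d * ?c\<^sup>2"
    using diag_identity[where d=d and s="Cx m k V V" and c= ?c] tr unfolding Q_def by simp
  also have "\<dots> = Q m k d V - \<tau>\<^sup>2 / real d" using d by (simp add: field_simps power2_eq_square)
  finally have L: "?L = Q m k d V - \<tau>\<^sup>2 / real d" .
  have "?L \<ge> 0" by (intro sum_nonneg) auto
  thus "Q m k d V \<ge> \<tau>\<^sup>2 / real d" using L by simp
  assume eq: "Q m k d V = \<tau>\<^sup>2 / real d"
  hence "?L = 0" using L by simp
  hence z: "\<forall>a\<in>{..<d}. \<forall>b\<in>{..<d}. (cmod (Cx m k V V a b - (if a = b then complex_of_real ?c else 0)))\<^sup>2 = 0"
    by (simp add: sum_nonneg_eq_0_iff sum_nonneg)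
  show "RS_op m d V = complex_of_real ?c \<cdot>\<^sub>m 1\<^sub>m d"
  proof (rule eq_matI)
    fix a b assume ab: "a < dim_row (complex_of_real ?c \<cdot>\<^sub>m 1\<^sub>m d)" "b < dim_col (complex_of_real ?c \<cdot>\<^sub>m 1\<^sub>m d)"
    hence "a < d" "b < d" by auto
    with z have "Cx m k V V a b = (if a = b then complex_of_real ?c else 0)" by auto
    thus "RS_op m d V $$ (a, b) = (complex_of_real ?c \<cdot>\<^sub>m 1\<^sub>m d) $$ (a, b)"
      using RS_index[OF sys \<open>a<d\<close> \<open>b<d\<close>] \<open>a<d\<close> \<open>b<d\<close> by auto
  qed auto
qed

lemma QW_bound: assumes sysV: "is_system m k d V" and sysW: "is_system m k d W"
  and norm: "\<forall>i<m. V i * mat_adjoint (V i) = complex_of_real ((v i)\<^sup>2) \<cdot>\<^sub>m 1\<^sub>m (k i)"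
  and cross: "cross_op m d W V = 1\<^sub>m d"
  and tau: "\<tau> = (\<Sum>i<m. (v i)\<^sup>2 * real (k i))" and d: "d > 0" and taupos: "\<tau> > 0"
  shows "Q m k d W \<ge> real d ^ 3 / \<tau>\<^sup>2"
    and "Q m k d W = real d ^ 3 / \<tau>\<^sup>2 \<Longrightarrow> \<forall>i<m. W i = complex_of_real (real d / \<tau>) \<cdot>\<^sub>m V i"
proof -
  define t where "t = (\<Sum>a<d. Re (Cx m k W W a a))"
  define \<alpha> where "\<alpha> = real d / \<tau>"
  let ?L = "(\<Sum>a<d. \<Sum>b<d. (cmod (Cx m k W W a b - (if a = b then complex_of_real (t / real d) else 0)))\<^sup>2)"
  have "?L = Q m k d W - 2 * (t / real d) * t + real d * (t / real d)\<^sup>2"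
    using diag_identity[where d=d and s="Cx m k W W" and c="t / real d"] unfolding Q_def t_def by simp
  also have "\<dots> = Q m k d W - t\<^sup>2 / real d" using d by (simp add: field_simps power2_eq_square)
  finally have L: "?L = Q m k d W - t\<^sup>2 / real d" .
  have "?L \<ge> 0" by (intro sum_nonneg) auto
  hence QWt: "Q m k d W \<ge> t\<^sup>2 / real d" using L by simp
  have trV: "(\<Sum>(i,c)\<in>IS m k. \<Sum>a<d. (cmod (V i $$ (c,a)))\<^sup>2) = \<tau>"
    using trace_V[OF sysV norm] tau Cx_trace_Re[where d=d and m=m and k=k and W=V] by simp
  have trW: "(\<Sum>(i,c)\<in>IS m k. \<Sum>a<d. (cmod (W i $$ (c,a)))\<^sup>2) = t"
    using Cx_trace_Re[where d=d and m=m and k=k and W=W] t_def by simp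
  have "(\<Sum>a<d. Re (Cx m k W V a a)) = (\<Sum>a<d. Re (cross_op m d W V $$ (a,a)))"
    using cross_index[OF sysW sysV] by simp
  also have "\<dots> = real d" using cross by simp
  finally have trWV: "(\<Sum>(i,c)\<in>IS m k. \<Sum>a<d. Re (cnj (W i $$ (c,a)) * V i $$ (c,a))) = real d"
    using Cx_trace_Re_cross[where d=d and m=m and k=k and W=W and V=V] by simp
  define D where "D = (\<Sum>(i,c)\<in>IS m k. \<Sum>a<d. (cmod (W i $$ (c,a) - complex_of_real \<alpha> * V i $$ (c,a)))\<^sup>2)"
  have "D = (\<Sum>(i,c)\<in>IS m k. \<Sum>a<d. (cmod (W i $$ (c,a)))\<^sup>2)
      - 2 * \<alpha> * (\<Sum>(i,c)\<in>IS m k. \<Sum>a<d. Re (cnj (W i $$ (c,a)) * V i $$ (c,a)))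
      + \<alpha>\<^sup>2 * (\<Sum>(i,c)\<in>IS m k. \<Sum>a<d. (cmod (V i $$ (c,a)))\<^sup>2)"
    unfolding D_def diff_identity
    by (simp only: case_prod_unfold sum_subtractf sum.distrib sum_distrib_left)
  also have "\<dots> = t - real d ^ 2 / \<tau>"
    unfolding trV trW trWV \<alpha>_def using taupos by (simp add: field_simps power2_eq_square)
  finally have Dt: "D = t - real d ^ 2 / \<tau>" .
  have "D \<ge> 0" unfolding D_def by (intro sum_nonneg) (auto simp: case_prod_unfold intro!: sum_nonneg)
  hence tge: "t \<ge> real d ^ 2 / \<tau>" using Dt by simp
  have "(real d ^ 2 / \<tau>)\<^sup>2 \<le> t\<^sup>2"
    using tge taupos by (intro power_mono) auto
  hence "(real d ^ 2 / \<tau>)\<^sup>2 / real d \<le> t\<^sup>2 / real d" using d by (simp add: divide_right_mono)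
  moreover have "(real d ^ 2 / \<tau>)\<^sup>2 / real d = real d ^ 3 / \<tau>\<^sup>2" using d
    by (simp add: field_simps power2_eq_square power3_eq_cube)
  ultimately show QW: "Q m k d W \<ge> real d ^ 3 / \<tau>\<^sup>2" using QWt by simp
  assume eq: "Q m k d W = real d ^ 3 / \<tau>\<^sup>2"
  have "t\<^sup>2 / real d \<le> (real d ^ 2 / \<tau>)\<^sup>2 / real d"
    using QWt eq \<open>(real d ^ 2 / \<tau>)\<^sup>2 / real d = real d ^ 3 / \<tau>\<^sup>2\<close> by simp
  moreover have gen: "\<And>a b (e::real). e > 0 \<Longrightarrow> a / e \<le> b / e \<Longrightarrow> a \<le> b"
    by (simp add: divide_le_cancel)
  moreover have dpos: "real d > 0" using d by simp
  ultimately have "t\<^sup>2 \<le> (real d ^ 2 / \<tau>)\<^sup>2" by blast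
  hence "t \<le> real d ^ 2 / \<tau>" by (rule power2_le_imp_le) (use taupos in simp)
  hence "D = 0" using Dt tge by simp
  hence z: "\<forall>p\<in>IS m k. \<forall>a\<in>{..<d}. (cmod (W (fst p) $$ (snd p,a) - complex_of_real \<alpha> * V (fst p) $$ (snd p,a)))\<^sup>2 = 0"
    unfolding D_def case_prod_unfold
    by (subst (asm) sum_nonneg_eq_0_iff) (auto simp: sum_nonneg_eq_0_iff intro!: sum_nonneg)
  show "\<forall>i<m. W i = complex_of_real (real d / \<tau>) \<cdot>\<^sub>m V i"
  proof (intro allI impI)
    fix i assume i: "i < m"
    have Wi: "W i \<in> carrier_mat (k i) d" and Vi: "V i \<in> carrier_mat (k i) d"
      using sysV sysW i unfolding is_system_def by auto
    show "W i = complex_of_real (real d / \<tau>) \<cdot>\<^sub>m V i"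
    proof (rule eq_matI)
      fix c a assume ca: "c < dim_row (complex_of_real (real d / \<tau>) \<cdot>\<^sub>m V i)" "a < dim_col (complex_of_real (real d / \<tau>) \<cdot>\<^sub>m V i)"
      hence ca': "c < k i" "a < d" using Vi by auto
      hence "(i,c) \<in> IS m k" using i unfolding IS_def by auto
      with z ca' have "W i $$ (c,a) = complex_of_real \<alpha> * V i $$ (c,a)" by fastforce
      thus "W i $$ (c, a) = (complex_of_real (real d / \<tau>) \<cdot>\<^sub>m V i) $$ (c, a)"
        using ca' Vi unfolding \<alpha>_def by auto
    qed (use Wi Vi in auto)
  qed
qed

lemma Cx_unf: "Cx m k W V a b = (\<Sum>p\<in>IS m k. cnj (W (fst p) $$ (snd p,a)) * V (fst p) $$ (snd p,b))"
  unfolding Cx_def case_prod_unfold ..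

lemma quad_form:
  "(\<Sum>a<d. cnj (x a) * (\<Sum>b<d. Cx m k V V a b * x b))
   = (\<Sum>p\<in>IS m k. cnj (\<Sum>b<d. V (fst p) $$ (snd p,b) * x b) * (\<Sum>b<d. V (fst p) $$ (snd p,b) * x b))"
proof -
  have "(\<Sum>a<d. cnj (x a) * (\<Sum>b<d. Cx m k V V a b * x b))
     = (\<Sum>a<d. \<Sum>b<d. \<Sum>p\<in>IS m k. cnj (x a) * cnj (V (fst p) $$ (snd p,a)) * V (fst p) $$ (snd p,b) * x b)"
    unfolding Cx_unf by (simp add: sum_distrib_left sum_distrib_right mult.assoc)
  also have "\<dots> = (\<Sum>a<d. \<Sum>p\<in>IS m k. \<Sum>b<d. cnj (x a) * cnj (V (fst p) $$ (snd p,a)) * V (fst p) $$ (snd p,b) * x b)"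
    by (rule sum.cong[OF refl], rule sum.swap)
  also have "\<dots> = (\<Sum>p\<in>IS m k. \<Sum>a<d. \<Sum>b<d. cnj (x a) * cnj (V (fst p) $$ (snd p,a)) * V (fst p) $$ (snd p,b) * x b)"
    by (rule sum.swap)
  also have "\<dots> = (\<Sum>p\<in>IS m k. cnj (\<Sum>b<d. V (fst p) $$ (snd p,b) * x b) * (\<Sum>b<d. V (fst p) $$ (snd p,b) * x b))"
    by (simp add: sum_product mult.commute mult.left_commute) (rule sum.cong[OF refl], rule sum.swap)
  finally show ?thesis .
qed

lemma back_form:
  "(\<Sum>b<d. Cx m k W V a b * x b) = (\<Sum>p\<in>IS m k. cnj (W (fst p) $$ (snd p,a)) * (\<Sum>b<d. V (fst p) $$ (snd p,b) * x b))"
  unfolding Cx_unf by (simp add: sum_distrib_left sum_distrib_right mult.assoc) (rule sum.swap)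

lemma sum_cmod_zero: assumes "finite A" "(\<Sum>p\<in>A. cnj (y p) * y p) = 0" shows "\<forall>p\<in>A. y p = 0"
proof -
  have "(\<Sum>p\<in>A. (cmod (y p))\<^sup>2) = Re (\<Sum>p\<in>A. cnj (y p) * y p)" by (simp only: Re_sum Re_cnj_mult)
  hence "(\<Sum>p\<in>A. (cmod (y p))\<^sup>2) = 0" using assms by simp
  hence "\<forall>p\<in>A. (cmod (y p))\<^sup>2 = 0" using assms(1) by (subst (asm) sum_nonneg_eq_0_iff) auto
  thus ?thesis by simp
qed

lemma det_RS_nonzero: assumes sysV: "is_system m k d V" and sysW: "is_system m k d W"
  and cross: "cross_op m d W V = 1\<^sub>m d"
  shows "det (RS_op m d V) \<noteq> 0"
proof
  assume "det (RS_op m d V) = 0"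
  then obtain x where x: "x \<in> carrier_vec d" "x \<noteq> 0\<^sub>v d" "RS_op m d V *\<^sub>v x = 0\<^sub>v d"
    using det_0_iff_vec_prod_zero[OF RS_op_carrier] by blast
  have Sx: "(\<Sum>b<d. Cx m k V V a b * x $ b) = 0" if "a < d" for a
  proof -
    have "(RS_op m d V *\<^sub>v x) $ a = (\<Sum>b<d. Cx m k V V a b * x $ b)"
      using that x(1) RS_index[OF sysV that] by (auto simp: scalar_prod_def lessThan_atLeast0 intro!: sum.cong)
    thus ?thesis using x(3) that by simp
  qed
  have "(\<Sum>p\<in>IS m k. cnj (\<Sum>b<d. V (fst p) $$ (snd p,b) * x $ b) * (\<Sum>b<d. V (fst p) $$ (snd p,b) * x $ b)) = 0"
    using quad_form[where x="\<lambda>b. x $ b" and d=d and m=m and k=k and V=V] Sx by simp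
  hence y0: "\<forall>p\<in>IS m k. (\<Sum>b<d. V (fst p) $$ (snd p,b) * x $ b) = 0"
    by (intro sum_cmod_zero) auto
  have "x $ a = 0" if "a < d" for a
  proof -
    have "(\<Sum>b<d. cross_op m d W V $$ (a,b) * x $ b) = (\<Sum>b<d. if a = b then x $ b else 0)"
      using that by (intro sum.cong) (auto simp: cross)
    also have "\<dots> = x $ a" using that by simp
    finally have "x $ a = (\<Sum>b<d. cross_op m d W V $$ (a,b) * x $ b)" by simp
    also have "\<dots> = (\<Sum>b<d. Cx m k W V a b * x $ b)"
      using cross_index[OF sysW sysV that] by simp
    also have "\<dots> = 0" unfolding back_form using y0 by simp
    finally show ?thesis .
  qed
  hence "x = 0\<^sub>v d" using x(1) by (intro eq_vecI) auto
  with x(2) show False by simp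
qed

lemma det_invertible: assumes A: "A \<in> carrier_mat n n" and "det A \<noteq> (0::complex)"
  shows "invertible_mat A"
proof -
  have "A \<in> Units (ring_mat TYPE(complex) n ())" by (rule det_non_zero_imp_unit[OF assms])
  then obtain B where B: "B \<in> carrier_mat n n" "B * A = 1\<^sub>m n" "A * B = 1\<^sub>m n"
    unfolding Units_def by (auto simp: ring_mat_simps)
  show ?thesis unfolding invertible_mat_def inverts_mat_def using A B by auto
qed

lemma invertible_mat_inverse: assumes A: "A \<in> carrier_mat n n" and inv: "invertible_mat (A :: complex mat)"
  shows "\<exists>B. mat_inverse A = Some B \<and> A * B = 1\<^sub>m n \<and> B * A = 1\<^sub>m n \<and> B \<in> carrier_mat n n"
proof (cases "mat_inverse A")
  case None
  from inv obtain B where AB: "A * B = 1\<^sub>m (dim_row A)" "B * A = 1\<^sub>m (dim_row B)"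
    unfolding invertible_mat_def inverts_mat_def by auto
  have "dim_row B = n" using AB(2) A by (metis carrier_matD(2) index_mult_mat(3) index_one_mat(3))
  moreover have "dim_col B = n" using AB(1) A by (metis carrier_matD(1) index_mult_mat(3) index_one_mat(3))
  ultimately have Bc: "B \<in> carrier_mat n n" by auto
  have "A \<in> Units (ring_mat TYPE(complex) n ())"
    unfolding Units_def using A Bc AB by (auto simp: ring_mat_simps)
  with mat_inverse(1)[OF A None, of "()"] show ?thesis by blast
next
  case (Some B)
  thus ?thesis using mat_inverse(2)[OF A Some] by auto
qed

lemma cross_sym: assumes sysV: "is_system m k d V" and sysW: "is_system m k d W"
  and cross: "cross_op m d W V = 1\<^sub>m d"
  shows "cross_op m d V W = 1\<^sub>m d"
proof (rule eq_matI)
  fix a b assume "a < dim_row (1\<^sub>m d)" "b < dim_col (1\<^sub>m d)"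
  hence ab: "a < d" "b < d" by auto
  have "cross_op m d V W $$ (a,b) = cnj (Cx m k W V b a)"
    using cross_index[OF sysV sysW ab] Cx_cnj[of m k V W a b] by simp
  also have "\<dots> = cnj (cross_op m d W V $$ (b,a))" using cross_index[OF sysW sysV ab(2) ab(1)] by simp
  also have "\<dots> = 1\<^sub>m d $$ (a,b)" using cross ab by simp
  finally show "cross_op m d V W $$ (a,b) = 1\<^sub>m d $$ (a,b)" .
qed auto

lemma DRS_I: assumes sysV: "is_system m k d V" and sysW: "is_system m k d W"
  and norm: "\<forall>i<m. V i * mat_adjoint (V i) = complex_of_real ((v i)\<^sup>2) \<cdot>\<^sub>m 1\<^sub>m (k i)"
  and cross: "cross_op m d W V = 1\<^sub>m d"
  shows "(V, W) \<in> DRS m k d v"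
proof -
  have iV: "invertible_mat (RS_op m d V)"
    by (rule det_invertible[OF RS_op_carrier det_RS_nonzero[OF sysV sysW cross]])
  have iW: "invertible_mat (RS_op m d W)"
    by (rule det_invertible[OF RS_op_carrier det_RS_nonzero[OF sysW sysV cross_sym[OF sysV sysW cross]]])
  show ?thesis unfolding DRS_def P_v_def RS_def duals_def using sysV sysW norm cross iV iW by auto
qed

lemma DRS_D: assumes "(V, W) \<in> DRS m k d v"
  shows "is_system m k d V" "is_system m k d W"
    "\<forall>i<m. V i * mat_adjoint (V i) = complex_of_real ((v i)\<^sup>2) \<cdot>\<^sub>m 1\<^sub>m (k i)"
    "cross_op m d W V = 1\<^sub>m d" "invertible_mat (RS_op m d V)"
  using assms unfolding DRS_def P_v_def RS_def duals_def by auto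

lemma mult_index_sum: assumes "A \<in> carrier_mat r n" "B \<in> carrier_mat n c" "i < r" "j < c"
  shows "(A * B) $$ (i,j) = (\<Sum>e<n. A $$ (i,e) * B $$ (e,j))"
  using assms by (auto simp: scalar_prod_def lessThan_atLeast0 intro!: sum.cong)

lemma canon_dual_props: assumes sysV: "is_system m k d V" and inv: "invertible_mat (RS_op m d V)"
  shows "is_system m k d (canon_dual m d V)" "cross_op m d (canon_dual m d V) V = 1\<^sub>m d"
proof -
  obtain B where B: "mat_inverse (RS_op m d V) = Some B" "RS_op m d V * B = 1\<^sub>m d" "B * RS_op m d V = 1\<^sub>m d"
    "B \<in> carrier_mat d d"
    using invertible_mat_inverse[OF RS_op_carrier inv] by blast
  have cd: "canon_dual m d V = (\<lambda>i. V i * B)" unfolding canon_dual_def B by simp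
  have Vi: "i < m \<Longrightarrow> V i \<in> carrier_mat (k i) d" for i using sysV unfolding is_system_def by auto
  show sysW: "is_system m k d (canon_dual m d V)" unfolding cd is_system_def using Vi B(4) by (auto intro!: mult_carrier_mat)
  show "cross_op m d (canon_dual m d V) V = 1\<^sub>m d"
  proof (rule eq_matI)
    fix a b assume "a < dim_row (1\<^sub>m d)" "b < dim_col (1\<^sub>m d)"
    hence ab: "a < d" "b < d" by auto
    have "cross_op m d (canon_dual m d V) V $$ (a,b) = Cx m k (\<lambda>i. V i * B) V a b"
      using cross_index[OF sysW sysV ab] cd by simp
    also have "\<dots> = (\<Sum>p\<in>IS m k. cnj (\<Sum>e<d. V (fst p) $$ (snd p,e) * B $$ (e,a)) * V (fst p) $$ (snd p,b))"
      unfolding Cx_unf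
      by (intro sum.cong refl, subst mult_index_sum[OF Vi B(4)]) (auto simp: IS_def ab)
    also have "\<dots> = (\<Sum>p\<in>IS m k. \<Sum>e<d. cnj (B $$ (e,a)) * (cnj (V (fst p) $$ (snd p,e)) * V (fst p) $$ (snd p,b)))"
      by (simp only: cnj_sum sum_distrib_right complex_cnj_mult) (intro sum.cong refl, simp only: ac_simps)
    also have "\<dots> = (\<Sum>e<d. \<Sum>p\<in>IS m k. cnj (B $$ (e,a)) * (cnj (V (fst p) $$ (snd p,e)) * V (fst p) $$ (snd p,b)))"
      by (rule sum.swap)
    also have "\<dots> = (\<Sum>e<d. cnj (B $$ (e,a)) * Cx m k V V e b)"
      unfolding Cx_unf by (simp only: sum_distrib_left)
    also have "\<dots> = (\<Sum>e<d. cnj (B $$ (e,a)) * cnj (RS_op m d V $$ (b,e)))"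
    proof (intro sum.cong refl)
      fix e assume "e \<in> {..<d}"
      hence "RS_op m d V $$ (b,e) = Cx m k V V b e" using RS_index[OF sysV ab(2)] by simp
      thus "cnj (B $$ (e,a)) * Cx m k V V e b = cnj (B $$ (e,a)) * cnj (RS_op m d V $$ (b,e))"
        using Cx_cnj[of m k V V e b] by simp
    qed
    also have "\<dots> = cnj ((RS_op m d V * B) $$ (b,a))"
      using mult_index_sum[OF RS_op_carrier B(4) ab(2) ab(1)] by (simp add: mult.commute)
    also have "\<dots> = 1\<^sub>m d $$ (a,b)" using B(2) ab by simp
    finally show "cross_op m d (canon_dual m d V) V $$ (a,b) = 1\<^sub>m d $$ (a,b)" .
  qed auto
qed

lemma canon_dual_tight: assumes sysV: "is_system m k d V" and S: "RS_op m d V = complex_of_real c \<cdot>\<^sub>m 1\<^sub>m d"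
  and c: "c > 0" and i: "i < m"
  shows "canon_dual m d V i = complex_of_real (1 / c) \<cdot>\<^sub>m V i"
proof -
  have inv: "invertible_mat (RS_op m d V)"
    unfolding invertible_mat_def inverts_mat_def S using c
    by (intro conjI exI[of _ "complex_of_real (1/c) \<cdot>\<^sub>m 1\<^sub>m d"]) (auto simp: square_mat.simps)
  obtain B where B: "mat_inverse (RS_op m d V) = Some B" "RS_op m d V * B = 1\<^sub>m d"
    "B \<in> carrier_mat d d"
    using invertible_mat_inverse[OF RS_op_carrier inv] by blast
  have Bv: "B $$ (a,b) = (if a = b then complex_of_real (1/c) else 0)" if "a < d" "b < d" for a b
  proof -
    have "(RS_op m d V * B) $$ (a,b) = (\<Sum>e<d. if a = e then complex_of_real c * B $$ (e,b) else 0)"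
      unfolding mult_index_sum[OF RS_op_carrier B(3) that] using that S by (intro sum.cong) auto
    also have "\<dots> = complex_of_real c * B $$ (a,b)" using that by simp
    finally have "complex_of_real c * B $$ (a,b) = (if a = b then 1 else 0)" using B(2) that by simp
    thus ?thesis using c by (auto simp: field_simps)
  qed
  have Vi: "V i \<in> carrier_mat (k i) d" using sysV i unfolding is_system_def by auto
  have cd: "canon_dual m d V i = V i * B" unfolding canon_dual_def B by simp
  show ?thesis unfolding cd
  proof (rule eq_matI)
    fix r a assume "r < dim_row (complex_of_real (1 / c) \<cdot>\<^sub>m V i)" "a < dim_col (complex_of_real (1 / c) \<cdot>\<^sub>m V i)"
    hence ra: "r < k i" "a < d" using Vi by auto
    have "(V i * B) $$ (r,a) = (\<Sum>e<d. V i $$ (r,e) * (if e = a then complex_of_real (1/c) else 0))"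
      unfolding mult_index_sum[OF Vi B(3) ra] using ra Bv by (intro sum.cong) auto
    also have "\<dots> = complex_of_real (1/c) * V i $$ (r,a)" using ra by (simp add: if_distrib cong: if_cong)
    finally show "(V i * B) $$ (r,a) = (complex_of_real (1 / c) \<cdot>\<^sub>m V i) $$ (r,a)" using ra Vi by simp
  qed (use Vi B(3) in auto)
qed

lemma Q_tight: assumes sysV: "is_system m k d V" and S: "RS_op m d V = complex_of_real c \<cdot>\<^sub>m 1\<^sub>m d"
  shows "Q m k d V = real d * c\<^sup>2"
proof -
  have "Q m k d V = (\<Sum>a<d. \<Sum>b<d. if a = b then c\<^sup>2 else 0)"
    unfolding Q_def
  proof (intro sum.cong refl)
    fix a b assume "a \<in> {..<d}" "b \<in> {..<d}"
    hence ab: "a < d" "b < d" by auto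
    have e1: "RS_op m d V $$ (a,b) = (if a=b then complex_of_real c else 0)" using ab by (simp add: S)
    have "Cx m k V V a b = (if a = b then complex_of_real c else 0)"
      by (simp only: RS_index[OF sysV ab, symmetric] e1)
    thus "(cmod (Cx m k V V a b))\<^sup>2 = (if a = b then c\<^sup>2 else 0)" by simp
  qed
  also have "\<dots> = real d * c\<^sup>2" by simp
  finally show ?thesis .
qed

lemma cm: "(cmod (complex_of_real (a\<^sup>2) * z))\<^sup>2 = a ^ 4 * (cmod z)\<^sup>2"
proof -
  have "cmod (complex_of_real (a\<^sup>2)) = a\<^sup>2" by (simp only: norm_of_real) simp
  hence "(cmod (complex_of_real (a\<^sup>2) * z))\<^sup>2 = (a\<^sup>2 * cmod z)\<^sup>2" by (simp only: norm_mult)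
  also have "\<dots> = a ^ 4 * (cmod z)\<^sup>2" by (simp add: power_mult_distrib flip: power_mult)
  finally show ?thesis .
qed

lemma Q_scaled: assumes sysV: "is_system m k d V" and W: "\<forall>i<m. W i = complex_of_real \<alpha> \<cdot>\<^sub>m V i"
  shows "Q m k d W = \<alpha> ^ 4 * Q m k d V"
proof -
  have Cx: "Cx m k W W a b = complex_of_real (\<alpha>\<^sup>2) * Cx m k V V a b" if "a < d" "b < d" for a b
  proof -
    have "Cx m k W W a b = (\<Sum>p\<in>IS m k. complex_of_real (\<alpha>\<^sup>2) * (cnj (V (fst p) $$ (snd p,a)) * V (fst p) $$ (snd p,b)))"
      unfolding Cx_unf
    proof (intro sum.cong refl)
      fix p assume p: "p \<in> IS m k"
      hence "fst p < m" "snd p < k (fst p)" unfolding IS_def by auto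
      hence Vi: "V (fst p) \<in> carrier_mat (k (fst p)) d" and "snd p < k (fst p)" using sysV unfolding is_system_def by auto
      thus "cnj (W (fst p) $$ (snd p, a)) * W (fst p) $$ (snd p, b) =
         complex_of_real (\<alpha>\<^sup>2) * (cnj (V (fst p) $$ (snd p,a)) * V (fst p) $$ (snd p,b))"
        using W \<open>fst p < m\<close> that by (simp add: power2_eq_square)
    qed
    thus ?thesis unfolding Cx_unf by (simp add: sum_distrib_left)
  qed
  have "Q m k d W = (\<Sum>a<d. \<Sum>b<d. \<alpha> ^ 4 * (cmod (Cx m k V V a b))\<^sup>2)"
    unfolding Q_def by (intro sum.cong refl) (simp only: Cx cm lessThan_iff)
  thus ?thesis unfolding Q_def by (simp add: sum_distrib_left)
qed

lemma subseq_conv: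
  fixes x :: "nat \<Rightarrow> 'j \<Rightarrow> real"
  assumes "finite J" and "\<forall>j\<in>J. \<forall>n. \<bar>x n j\<bar> \<le> B"
  shows "\<exists>r. strict_mono r \<and> (\<forall>j\<in>J. convergent (\<lambda>n. x (r n) j))"
  using assms
proof (induction J rule: finite_induct)
  case empty
  show ?case by (rule exI[of _ id]) (auto simp: strict_mono_def)
next
  case (insert j F)
  then obtain r where r: "strict_mono r" "\<forall>j\<in>F. convergent (\<lambda>n. x (r n) j)" by auto
  obtain s where s: "strict_mono s" "monoseq (\<lambda>n. x (r (s n)) j)"
    using seq_monosub[of "\<lambda>n. x (r n) j"] by auto
  have "Bseq (\<lambda>n. x (r (s n)) j)" using insert.prems by (intro BseqI') auto
  hence cj: "convergent (\<lambda>n. x (r (s n)) j)" using s(2) by (rule Bseq_monoseq_convergent)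
  have "convergent (\<lambda>n. x (r (s n)) j')" if "j' \<in> F" for j'
  proof -
    have "(\<lambda>n. x (r n) j') \<longlonglongrightarrow> lim (\<lambda>n. x (r n) j')" using r(2) that convergent_LIMSEQ_iff by blast
    from LIMSEQ_subseq_LIMSEQ[OF this s(1)] show ?thesis unfolding convergent_def o_def by blast
  qed
  thus ?case using cj strict_mono_compose[OF r(1) s(1)] by (intro exI[of _ "\<lambda>n. r (s n)"]) auto
qed

lemma Q_nonneg: "Q m k d V \<ge> 0" unfolding Q_def by (intro sum_nonneg) auto

lemma entry_bound: assumes sys: "is_system m k d V" and p: "p \<in> IS m k" and a: "a < d"
  shows "(cmod (V (fst p) $$ (snd p,a)))\<^sup>2 \<le> sqrt (Q m k d V)"
proof -
  have "(cmod (V (fst p) $$ (snd p,a)))\<^sup>2 \<le> (\<Sum>q\<in>IS m k. (cmod (V (fst q) $$ (snd q,a)))\<^sup>2)"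
    by (rule member_le_sum[OF p]) auto
  also have "\<dots> = Re (Cx m k V V a a)"
    unfolding Cx_unf by (simp only: Re_sum Re_cnj_mult)
  also have "\<dots> \<le> cmod (Cx m k V V a a)" by (rule complex_Re_le_cmod)
  also have "\<dots> = sqrt ((cmod (Cx m k V V a a))\<^sup>2)" by simp
  also have "\<dots> \<le> sqrt (Q m k d V)"
  proof (rule real_sqrt_le_mono)
    have "(cmod (Cx m k V V a a))\<^sup>2 \<le> (\<Sum>b<d. (cmod (Cx m k V V a b))\<^sup>2)"
      by (rule member_le_sum[of a "{..<d}" "\<lambda>b. (cmod (Cx m k V V a b))\<^sup>2"]) (use a in auto)
    also have "\<dots> \<le> Q m k d V" unfolding Q_def
      by (rule member_le_sum[of a "{..<d}" "\<lambda>a. \<Sum>b<d. (cmod (Cx m k V V a b))\<^sup>2"]) (use a in \<open>auto intro!: sum_nonneg\<close>)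
    finally show "(cmod (Cx m k V V a a))\<^sup>2 \<le> Q m k d V" .
  qed
  finally show ?thesis .
qed

lemma Cx_tendsto:
  assumes hW: "\<And>p a. p \<in> IS m k \<Longrightarrow> a < d \<Longrightarrow> (\<lambda>n. W n (fst p) $$ (snd p,a)) \<longlonglongrightarrow> W' (fst p) $$ (snd p,a)"
    and hV: "\<And>p a. p \<in> IS m k \<Longrightarrow> a < d \<Longrightarrow> (\<lambda>n. V n (fst p) $$ (snd p,a)) \<longlonglongrightarrow> V' (fst p) $$ (snd p,a)"
    and ab: "a < d" "b < d"
  shows "(\<lambda>n. Cx m k (W n) (V n) a b) \<longlonglongrightarrow> Cx m k W' V' a b"
  unfolding Cx_unf by (intro tendsto_sum tendsto_mult tendsto_cnj hW hV ab)

lemma Q_tendsto: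
  assumes hV: "\<And>p a. p \<in> IS m k \<Longrightarrow> a < d \<Longrightarrow> (\<lambda>n. V n (fst p) $$ (snd p,a)) \<longlonglongrightarrow> V' (fst p) $$ (snd p,a)"
  shows "(\<lambda>n. Q m k d (V n)) \<longlonglongrightarrow> Q m k d V'"
  unfolding Q_def by (intro tendsto_sum tendsto_power tendsto_norm Cx_tendsto hV) auto

lemma complex_seq_conv:
  assumes "convergent (\<lambda>n. Re (z n))" "convergent (\<lambda>n. Im (z n))"
  shows "z \<longlonglongrightarrow> Complex (lim (\<lambda>n. Re (z n))) (lim (\<lambda>n. Im (z n)))"
proof -
  have "(\<lambda>n. Complex (Re (z n)) (Im (z n))) \<longlonglongrightarrow> Complex (lim (\<lambda>n. Re (z n))) (lim (\<lambda>n. Im (z n)))"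
    using assms by (intro tendsto_Complex) (auto simp: convergent_LIMSEQ_iff)
  thus ?thesis by simp
qed

lemma attain: assumes ne: "DRS m k d v \<noteq> {}"
  shows "\<exists>(V, W)\<in>DRS m k d v. FP m d V W = Inf ((\<lambda>(V, W). FP m d V W) ` DRS m k d v)"
proof -
  let ?f = "\<lambda>(V, W). FP m d V W"
  define P where "P = Inf (?f ` DRS m k d v)"
  have FPnn: "?f x \<ge> 0" if "x \<in> DRS m k d v" for x
  proof -
    obtain V W where x: "x = (V, W)" by (cases x)
    note D = DRS_D[OF that[unfolded x]]
    show ?thesis unfolding x using FP_Q[OF D(1) D(2)] Q_nonneg[of m k d V] Q_nonneg[of m k d W] by simp
  qed
  have bdd: "bdd_below (?f ` DRS m k d v)" unfolding bdd_below_def using FPnn by blast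
  have "\<exists>x. x \<in> DRS m k d v \<and> ?f x < P + inverse (real (Suc n))" for n
  proof -
    have "P < P + inverse (real (Suc n))" by simp
    hence "\<exists>y\<in>?f ` DRS m k d v. y < P + inverse (real (Suc n))"
      using cInf_less_iff[of "?f ` DRS m k d v"] ne bdd unfolding P_def by blast
    thus ?thesis by blast
  qed
  then obtain s where s: "\<And>n. s n \<in> DRS m k d v" "\<And>n. ?f (s n) < P + inverse (real (Suc n))"
    by metis
  define Vs where "Vs n = fst (s n)" for n
  define Ws where "Ws n = snd (s n)" for n
  have sD: "(Vs n, Ws n) \<in> DRS m k d v" for n using s(1)[of n] unfolding Vs_def Ws_def by simp
  have fs: "FP m d (Vs n) (Ws n) < P + inverse (real (Suc n))" for n
    using s(2)[of n] unfolding Vs_def Ws_def by (simp add: case_prod_unfold)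
  have Pl: "P \<le> FP m d (Vs n) (Ws n)" for n
    unfolding P_def by (rule cInf_lower[OF _ bdd], rule image_eqI[where x="(Vs n, Ws n)"]) (use sD in simp_all)
  have QV: "Q m k d (Vs n) \<le> P + 1" and QW: "Q m k d (Ws n) \<le> P + 1" for n
  proof -
    note D = DRS_D[OF sD[of n]]
    have "inverse (real (Suc n)) \<le> 1" by (simp add: inverse_le_1_iff)
    hence "FP m d (Vs n) (Ws n) \<le> P + 1" using fs[of n] by linarith
    thus "Q m k d (Vs n) \<le> P + 1" "Q m k d (Ws n) \<le> P + 1"
      using FP_Q[OF D(1) D(2)] Q_nonneg[of m k d "Vs n"] Q_nonneg[of m k d "Ws n"] by linarith+
  qed
  define M where "M = sqrt (sqrt (P + 1))"
  have cmodb: "cmod (X n (fst p) $$ (snd p,a)) \<le> M"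
    if X: "X = Vs \<or> X = Ws" and p: "p \<in> IS m k" and a: "a < d" for X n p a
  proof -
    note D = DRS_D[OF sD[of n]]
    have sysX: "is_system m k d (X n)" using X D by auto
    have QX: "Q m k d (X n) \<le> P + 1" using X QV QW by auto
    have "(cmod (X n (fst p) $$ (snd p,a)))\<^sup>2 \<le> sqrt (Q m k d (X n))" by (rule entry_bound[OF sysX p a])
    also have "\<dots> \<le> sqrt (P + 1)" using QX by simp
    finally show ?thesis unfolding M_def by (rule real_le_rsqrt)
  qed
  define J where "J = (UNIV :: bool set) \<times> (UNIV :: bool set) \<times> (IS m k \<times> {..<d})"
  have fJ: "finite J" unfolding J_def by auto
  define x where "x n j = (let z = (if fst (snd j) then Vs n else Ws n) (fst (fst (snd (snd j)))) $$ (snd (fst (snd (snd j))), snd (snd (snd j))) in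
       if fst j then Re z else Im z)" for n j
  have xb: "\<forall>j\<in>J. \<forall>n. \<bar>x n j\<bar> \<le> M"
  proof (intro ballI allI)
    fix j n assume j: "j \<in> J"
    obtain q b p a where jj: "j = (q, b, p, a)" by (cases j) auto
    have p: "p \<in> IS m k" and a: "a < d" using j unfolding jj J_def by auto
    have X: "(if b then Vs else Ws) = Vs \<or> (if b then Vs else Ws) = Ws" by simp
    define z where "z = (if b then Vs else Ws) n (fst p) $$ (snd p,a)"
    have zM: "cmod z \<le> M" unfolding z_def by (rule cmodb[OF X p a])
    have xz: "x n j = (if q then Re z else Im z)" unfolding x_def jj Let_def z_def by simp
    show "\<bar>x n j\<bar> \<le> M" unfolding xz using zM abs_Re_le_cmod[of z] abs_Im_le_cmod[of z] by auto
  qed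
  obtain r where r: "strict_mono r" "\<forall>j\<in>J. convergent (\<lambda>n. x (r n) j)"
    using subseq_conv[OF fJ xb] by blast
  define LV where "LV i c a = Complex (lim (\<lambda>n. Re (Vs (r n) i $$ (c,a)))) (lim (\<lambda>n. Im (Vs (r n) i $$ (c,a))))" for i c a
  define LW where "LW i c a = Complex (lim (\<lambda>n. Re (Ws (r n) i $$ (c,a)))) (lim (\<lambda>n. Im (Ws (r n) i $$ (c,a))))" for i c a
  define Vl where "Vl i = mat (k i) d (\<lambda>(c,a). LV i c a)" for i
  define Wl where "Wl i = mat (k i) d (\<lambda>(c,a). LW i c a)" for i
  have convV: "(\<lambda>n. Vs (r n) (fst p) $$ (snd p,a)) \<longlonglongrightarrow> Vl (fst p) $$ (snd p,a)"
    if p: "p \<in> IS m k" and a: "a < d" for p a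
  proof -
    have c1: "convergent (\<lambda>n. Re (Vs (r n) (fst p) $$ (snd p,a)))"
      using r(2)[rule_format, of "(True, True, p, a)"] p a unfolding J_def x_def by simp
    have c2: "convergent (\<lambda>n. Im (Vs (r n) (fst p) $$ (snd p,a)))"
      using r(2)[rule_format, of "(False, True, p, a)"] p a unfolding J_def x_def by simp
    have "snd p < k (fst p)" using p unfolding IS_def by auto
    thus ?thesis using complex_seq_conv[OF c1 c2] a unfolding Vl_def LV_def by simp
  qed
  have convW: "(\<lambda>n. Ws (r n) (fst p) $$ (snd p,a)) \<longlonglongrightarrow> Wl (fst p) $$ (snd p,a)"
    if p: "p \<in> IS m k" and a: "a < d" for p a
  proof -
    have c1: "convergent (\<lambda>n. Re (Ws (r n) (fst p) $$ (snd p,a)))"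
      using r(2)[rule_format, of "(True, False, p, a)"] p a unfolding J_def x_def by simp
    have c2: "convergent (\<lambda>n. Im (Ws (r n) (fst p) $$ (snd p,a)))"
      using r(2)[rule_format, of "(False, False, p, a)"] p a unfolding J_def x_def by simp
    have "snd p < k (fst p)" using p unfolding IS_def by auto
    thus ?thesis using complex_seq_conv[OF c1 c2] a unfolding Wl_def LW_def by simp
  qed
  have sysVl: "is_system m k d Vl" unfolding is_system_def Vl_def by auto
  have sysWl: "is_system m k d Wl" unfolding is_system_def Wl_def by auto
  have normVl: "\<forall>i<m. Vl i * mat_adjoint (Vl i) = complex_of_real ((v i)\<^sup>2) \<cdot>\<^sub>m 1\<^sub>m (k i)"
  proof (intro allI impI)
    fix i assume i: "i < m"
    have Vli: "Vl i \<in> carrier_mat (k i) d" unfolding Vl_def by auto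
    show "Vl i * mat_adjoint (Vl i) = complex_of_real ((v i)\<^sup>2) \<cdot>\<^sub>m 1\<^sub>m (k i)"
    proof (rule eq_matI)
      fix c c' assume "c < dim_row (complex_of_real ((v i)\<^sup>2) \<cdot>\<^sub>m 1\<^sub>m (k i))"
        "c' < dim_col (complex_of_real ((v i)\<^sup>2) \<cdot>\<^sub>m 1\<^sub>m (k i))"
      hence cc: "c < k i" "c' < k i" by auto
      hence pc: "(i,c) \<in> IS m k" "(i,c') \<in> IS m k" using i unfolding IS_def by auto
      have Vni: "Vs (r n) i \<in> carrier_mat (k i) d" for n
        using DRS_D(1)[OF sD[of "r n"]] i unfolding is_system_def by auto
      have lim1: "(\<lambda>n. \<Sum>a<d. Vs (r n) i $$ (c,a) * cnj (Vs (r n) i $$ (c',a)))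
          \<longlonglongrightarrow> (\<Sum>a<d. Vl i $$ (c,a) * cnj (Vl i $$ (c',a)))"
        using convV[OF pc(1)] convV[OF pc(2)] by (auto intro!: tendsto_sum tendsto_mult tendsto_cnj)
      have "(\<Sum>a<d. Vs (r n) i $$ (c,a) * cnj (Vs (r n) i $$ (c',a))) = (complex_of_real ((v i)\<^sup>2) \<cdot>\<^sub>m 1\<^sub>m (k i)) $$ (c,c')" for n
      proof -
        have "(\<Sum>a<d. Vs (r n) i $$ (c,a) * cnj (Vs (r n) i $$ (c',a))) = (Vs (r n) i * mat_adjoint (Vs (r n) i)) $$ (c,c')"
          using multadj_index[OF Vni[of n] cc] by simp
        also have "\<dots> = (complex_of_real ((v i)\<^sup>2) \<cdot>\<^sub>m 1\<^sub>m (k i)) $$ (c,c')"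
          by (simp only: DRS_D(3)[OF sD[of "r n"], rule_format, OF i])
        finally show ?thesis .
      qed
      hence "(\<lambda>n. \<Sum>a<d. Vs (r n) i $$ (c,a) * cnj (Vs (r n) i $$ (c',a))) \<longlonglongrightarrow> (complex_of_real ((v i)\<^sup>2) \<cdot>\<^sub>m 1\<^sub>m (k i)) $$ (c,c')"
        by simp
      from LIMSEQ_unique[OF lim1 this] show "(Vl i * mat_adjoint (Vl i)) $$ (c,c') = (complex_of_real ((v i)\<^sup>2) \<cdot>\<^sub>m 1\<^sub>m (k i)) $$ (c,c')"
        using multadj_index[OF Vli cc] by simp
    qed (use Vli in auto)
  qed
  have crossl: "cross_op m d Wl Vl = 1\<^sub>m d"
  proof (rule eq_matI)
    fix a b assume "a < dim_row (1\<^sub>m d)" "b < dim_col (1\<^sub>m d)"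
    hence ab: "a < d" "b < d" by auto
    have lim1: "(\<lambda>n. Cx m k (Ws (r n)) (Vs (r n)) a b) \<longlonglongrightarrow> Cx m k Wl Vl a b"
      by (rule Cx_tendsto[OF convW convV ab])
    have "Cx m k (Ws (r n)) (Vs (r n)) a b = 1\<^sub>m d $$ (a,b)" for n
      using cross_index[OF DRS_D(2)[OF sD[of "r n"]] DRS_D(1)[OF sD[of "r n"]] ab] DRS_D(4)[OF sD[of "r n"]] by simp
    hence "(\<lambda>n. Cx m k (Ws (r n)) (Vs (r n)) a b) \<longlonglongrightarrow> 1\<^sub>m d $$ (a,b)" by simp
    from LIMSEQ_unique[OF lim1 this] show "cross_op m d Wl Vl $$ (a,b) = 1\<^sub>m d $$ (a,b)"
      using cross_index[OF sysWl sysVl ab] by simp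
  qed auto
  have inD: "(Vl, Wl) \<in> DRS m k d v" by (rule DRS_I[OF sysVl sysWl normVl crossl])
  have limFP: "(\<lambda>n. FP m d (Vs (r n)) (Ws (r n))) \<longlonglongrightarrow> FP m d Vl Wl"
  proof -
    have "(\<lambda>n. Q m k d (Vs (r n)) + Q m k d (Ws (r n))) \<longlonglongrightarrow> Q m k d Vl + Q m k d Wl"
      by (intro tendsto_add Q_tendsto convV convW)
    moreover have "FP m d (Vs (r n)) (Ws (r n)) = Q m k d (Vs (r n)) + Q m k d (Ws (r n))" for n
      using FP_Q[OF DRS_D(1)[OF sD[of "r n"]] DRS_D(2)[OF sD[of "r n"]]] .
    ultimately show ?thesis using FP_Q[OF sysVl sysWl] by simp
  qed
  have limP: "(\<lambda>n. FP m d (Vs (r n)) (Ws (r n))) \<longlonglongrightarrow> P"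
  proof (rule real_tendsto_sandwich[OF _ _ tendsto_const LIMSEQ_inverse_real_of_nat_add[of P]])
    show "\<forall>\<^sub>F n in sequentially. P \<le> FP m d (Vs (r n)) (Ws (r n))" using Pl by simp
    have "FP m d (Vs (r n)) (Ws (r n)) \<le> P + inverse (real (Suc n))" for n
    proof -
      have "n \<le> r n" by (rule seq_suble[OF r(1)])
      hence "inverse (real (Suc (r n))) \<le> inverse (real (Suc n))" by (simp add: le_imp_inverse_le)
      thus ?thesis using fs[of "r n"] by linarith
    qed
    thus "\<forall>\<^sub>F n in sequentially. FP m d (Vs (r n)) (Ws (r n)) \<le> P + inverse (real (Suc n))" by simp
  qed
  have "FP m d Vl Wl = P" by (rule LIMSEQ_unique[OF limFP limP])
  thus ?thesis using inD unfolding P_def by blast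
qed

lemma b0: fixes x y :: real assumes "x > 0" "y > 0"
  shows "(x ^ 4 + y ^ 4) / (y * x\<^sup>2) = x\<^sup>2 / y + y ^ 3 / x\<^sup>2"
  using assms by (simp add: field_simps eval_nat_numeral)

lemma b1: fixes x y :: real assumes "x > 0" "y > 0"
  shows "y * (x / y)\<^sup>2 = x\<^sup>2 / y"  "(y / x) ^ 4 * (y * (x / y)\<^sup>2) = y ^ 3 / x\<^sup>2"
  using assms by (simp_all add: field_simps eval_nat_numeral)

theorem proposition6p1:
  fixes m d :: nat and k :: "nat \<Rightarrow> nat" and v :: "nat \<Rightarrow> real"
  assumes "m \<ge> 1" and "d \<ge> 1"
    and "\<forall>i<m. 1 \<le> k i \<and> k i \<le> d"
    and "\<forall>i<m. v i > 0"
    and "P_v m k d v \<noteq> {}"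
  defines "\<tau> \<equiv> (\<Sum>i<m. (v i)\<^sup>2 * real (k i))"
    and "p \<equiv> Inf ((\<lambda>(V, W). FP m d V W) ` DRS m k d v)"
  shows "(\<exists>(V, W)\<in>DRS m k d v. FP m d V W = p)
    \<and> (\<forall>(V, W)\<in>DRS m k d v. FP m d V W \<ge> p
          \<and> p \<ge> (\<tau> ^ 4 + real d ^ 4) / (real d * \<tau>\<^sup>2))
    \<and> (\<forall>(V, W)\<in>DRS m k d v.
          FP m d V W = (\<tau> ^ 4 + real d ^ 4) / (real d * \<tau>\<^sup>2) \<longleftrightarrow>
          (RS_op m d V = complex_of_real (\<tau> / real d) \<cdot>\<^sub>m 1\<^sub>m d
           \<and> (\<forall>i<m. W i = complex_of_real (real d / \<tau>) \<cdot>\<^sub>m V i)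
           \<and> (\<forall>i<m. W i = canon_dual m d V i)))"
proof -
  have d: "d > 0" using assms(2) by simp
  have tau: "\<tau> = (\<Sum>i<m. (v i)\<^sup>2 * real (k i))" by (simp add: \<tau>_def)
  have "(v 0)\<^sup>2 * real (k 0) \<le> \<tau>" unfolding \<tau>_def
    by (rule member_le_sum) (use assms(1) in auto)
  moreover have "(v 0)\<^sup>2 * real (k 0) > 0"
  proof -
    have "v 0 > 0" "k 0 \<ge> 1" using assms(1,3,4) by auto
    thus ?thesis by (intro mult_pos_pos) auto
  qed
  ultimately have taupos: "\<tau> > 0" by linarith
  define B0 where "B0 = (\<tau> ^ 4 + real d ^ 4) / (real d * \<tau>\<^sup>2)"
  have B0eq: "B0 = \<tau>\<^sup>2 / real d + real d ^ 3 / \<tau>\<^sup>2"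
    unfolding B0_def using b0[OF taupos, of "real d"] d by simp
  have lower: "FP m d V W \<ge> B0" if "(V, W) \<in> DRS m k d v" for V W
  proof -
    note D = DRS_D[OF that]
    have "Q m k d V \<ge> \<tau>\<^sup>2 / real d" by (rule QV_bound(1)[OF D(1) D(3) tau d])
    moreover have "Q m k d W \<ge> real d ^ 3 / \<tau>\<^sup>2" by (rule QW_bound(1)[OF D(1) D(2) D(3) D(4) tau d taupos])
    ultimately show ?thesis unfolding FP_Q[OF D(1) D(2)] B0eq by simp
  qed
  obtain V0 where V0: "V0 \<in> P_v m k d v" using assms(5) by auto
  have V0s: "is_system m k d V0" "invertible_mat (RS_op m d V0)"
    "\<forall>i<m. V0 i * mat_adjoint (V0 i) = complex_of_real ((v i)\<^sup>2) \<cdot>\<^sub>m 1\<^sub>m (k i)"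
    using V0 unfolding P_v_def RS_def by auto
  note cdp = canon_dual_props[OF V0s(1,2)]
  have ne: "DRS m k d v \<noteq> {}"
    using DRS_I[OF V0s(1) cdp(1) V0s(3) cdp(2)] by auto
  let ?F = "(\<lambda>(V, W). FP m d V W) ` DRS m k d v"
  have bdd: "bdd_below ?F" unfolding bdd_below_def using lower by fast
  have pge: "p \<ge> B0" unfolding p_def using ne lower by (intro cInf_greatest) auto
  have FPge: "FP m d V W \<ge> p" if "(V, W) \<in> DRS m k d v" for V W
    unfolding p_def by (rule cInf_lower[OF _ bdd], rule image_eqI[where x="(V,W)"]) (use that in simp_all)
  have eq3: "FP m d V W = B0 \<longleftrightarrow>
          (RS_op m d V = complex_of_real (\<tau> / real d) \<cdot>\<^sub>m 1\<^sub>m d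
           \<and> (\<forall>i<m. W i = complex_of_real (real d / \<tau>) \<cdot>\<^sub>m V i)
           \<and> (\<forall>i<m. W i = canon_dual m d V i))" if VW: "(V, W) \<in> DRS m k d v" for V W
  proof
    note D = DRS_D[OF VW]
    have Q1: "Q m k d V \<ge> \<tau>\<^sup>2 / real d" by (rule QV_bound(1)[OF D(1) D(3) tau d])
    have Q2: "Q m k d W \<ge> real d ^ 3 / \<tau>\<^sup>2" by (rule QW_bound(1)[OF D(1) D(2) D(3) D(4) tau d taupos])
    assume "FP m d V W = B0"
    hence "Q m k d V + Q m k d W = \<tau>\<^sup>2 / real d + real d ^ 3 / \<tau>\<^sup>2" unfolding FP_Q[OF D(1) D(2)] B0eq .
    hence e1: "Q m k d V = \<tau>\<^sup>2 / real d" and e2: "Q m k d W = real d ^ 3 / \<tau>\<^sup>2" using Q1 Q2 by linarith+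
    have S: "RS_op m d V = complex_of_real (\<tau> / real d) \<cdot>\<^sub>m 1\<^sub>m d" by (rule QV_bound(2)[OF D(1) D(3) tau d e1])
    have W: "\<forall>i<m. W i = complex_of_real (real d / \<tau>) \<cdot>\<^sub>m V i" by (rule QW_bound(2)[OF D(1) D(2) D(3) D(4) tau d taupos e2])
    have "\<forall>i<m. W i = canon_dual m d V i"
    proof (intro allI impI)
      fix i assume i: "i < m"
      have "canon_dual m d V i = complex_of_real (1 / (\<tau> / real d)) \<cdot>\<^sub>m V i"
        by (rule canon_dual_tight[OF D(1) S _ i]) (use taupos d in simp)
      thus "W i = canon_dual m d V i" using W i by simp
    qed
    thus "RS_op m d V = complex_of_real (\<tau> / real d) \<cdot>\<^sub>m 1\<^sub>m d
           \<and> (\<forall>i<m. W i = complex_of_real (real d / \<tau>) \<cdot>\<^sub>m V i)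
           \<and> (\<forall>i<m. W i = canon_dual m d V i)" using S W by simp
  next
    note D = DRS_D[OF VW]
    assume H: "RS_op m d V = complex_of_real (\<tau> / real d) \<cdot>\<^sub>m 1\<^sub>m d
           \<and> (\<forall>i<m. W i = complex_of_real (real d / \<tau>) \<cdot>\<^sub>m V i)
           \<and> (\<forall>i<m. W i = canon_dual m d V i)"
    have q1: "Q m k d V = real d * (\<tau> / real d)\<^sup>2" by (rule Q_tight[OF D(1) conjunct1[OF H]])
    have q2: "Q m k d W = (real d / \<tau>) ^ 4 * Q m k d V" by (rule Q_scaled[OF D(1) conjunct1[OF conjunct2[OF H]]])
    show "FP m d V W = B0" unfolding FP_Q[OF D(1) D(2)] B0eq q2 q1
      using b1[OF taupos, of "real d"] d by simp
  qed
  have att: "\<exists>(V, W)\<in>DRS m k d v. FP m d V W = p" unfolding p_def by (rule attain[OF ne])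
  have p2: "\<forall>(V, W)\<in>DRS m k d v. FP m d V W \<ge> p
          \<and> p \<ge> (\<tau> ^ 4 + real d ^ 4) / (real d * \<tau>\<^sup>2)"
  proof (intro ballI)
    fix x assume "x \<in> DRS m k d v"
    then obtain V W where x: "x = (V, W)" "(V, W) \<in> DRS m k d v" by (cases x) auto
    have "FP m d V W \<ge> p" by (rule FPge[OF x(2)])
    moreover have "p \<ge> (\<tau> ^ 4 + real d ^ 4) / (real d * \<tau>\<^sup>2)" using pge unfolding B0_def .
    ultimately show "case x of (V, W) \<Rightarrow> FP m d V W \<ge> p
          \<and> p \<ge> (\<tau> ^ 4 + real d ^ 4) / (real d * \<tau>\<^sup>2)" unfolding x(1) by simp
  qed
  have p3: "\<forall>(V, W)\<in>DRS m k d v.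
          FP m d V W = (\<tau> ^ 4 + real d ^ 4) / (real d * \<tau>\<^sup>2) \<longleftrightarrow>
          (RS_op m d V = complex_of_real (\<tau> / real d) \<cdot>\<^sub>m 1\<^sub>m d
           \<and> (\<forall>i<m. W i = complex_of_real (real d / \<tau>) \<cdot>\<^sub>m V i)
           \<and> (\<forall>i<m. W i = canon_dual m d V i))"
  proof (intro ballI)
    fix x assume "x \<in> DRS m k d v"
    then obtain V W where x: "x = (V, W)" "(V, W) \<in> DRS m k d v" by (cases x) auto
    show "case x of (V, W) \<Rightarrow> FP m d V W = (\<tau> ^ 4 + real d ^ 4) / (real d * \<tau>\<^sup>2) \<longleftrightarrow>
          (RS_op m d V = complex_of_real (\<tau> / real d) \<cdot>\<^sub>m 1\<^sub>m d
           \<and> (\<forall>i<m. W i = complex_of_real (real d / \<tau>) \<cdot>\<^sub>m V i)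
           \<and> (\<forall>i<m. W i = canon_dual m d V i))"
      unfolding x(1) prod.case using eq3[OF x(2)] unfolding B0_def .
  qed
  show ?thesis using att p2 p3 by (intro conjI)
qed

end
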